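(* Assume $\theta_i<1$ for all $i$ and $\theta_j>0$ for some $j$. Then the map $F:\Delta_n\to\Delta_n$, $F(x)=(I_n-\Theta)(I_n-W(x)^T\Theta)^{-1}\mathbf 1_n/n$, satisfies: (i) $F$ is differentiable on $\operatorname{int}\Delta_n$ and continuous on $\Delta_n$; (ii) its Jacobian is $\dfrac{\partial F}{\partial x}=(I_n-\Theta)(I_n-W(x)^T\Theta)^{-1}(I_n-C^T)\Theta(I_n-\Theta)^{-1}\mathrm{diag}(F(x))$; (iii) for every $x\in\Delta_n$ and every $i$, $\dfrac{1-\theta_i}{n}\le F_i(x)\le \dfrac{1+\zeta}{n}$, where $\zeta=n\theta_{\mathrm{ave}}-\theta_{\min}$.
   Context: Let $n\ge 2$, $\mathbf 1_n$ the all-ones vector, $I_n$ the identity matrix, $\Delta_n=\{x\in\mathbb R^n: x\ge 0,\ \mathbf 1_n^Tx=1\}$, $\operatorname{int}\Delta_n=\{x\in\mathbb R^n: x>0,\ \mathbf 1_n^Tx=1\}$. Let $C\in\mathbb R^{n\times n}$ be a nonnegative row-stochastic matrix with zero diagonal, $\theta\in[0,1]^n$, $\Theta=\mathrm{diag}(\theta)$, and for $x\in\mathbb R^n$, $W(x)=\mathrm{diag}(x)+(I_n-\mathrm{diag}(x))C$. Under the stated assumption on $\theta$, $I_n-W(x)^T\Theta$ is invertible for every $x\in\Delta_n$. Let $\theta_{\min}=\min_j\theta_j$ and $\theta_{\mathrm{ave}}=\frac1n\sum_{j=1}^n\theta_j$. *)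

theory Defs
  imports "HOL-Analysis.Analysis"
begin

text \<open>Vectors in R^n are modelled as real^'n, n = CARD('n); matrices as real^'n^'n.\<close>

definition ones :: "real^'n" where
  "ones = (\<chi> i. 1)"

definition diagm :: "real^'n \<Rightarrow> real^'n^'n" where
  "diagm x = (\<chi> i j. if i = j then x $ i else 0)"

definition Delta :: "(real^'n) set" where
  "Delta = {x. (\<forall>i. 0 \<le> x $ i) \<and> (\<Sum>i\<in>UNIV. x $ i) = 1}"

definition int_Delta :: "(real^'n) set" where
  "int_Delta = {x. (\<forall>i. 0 < x $ i) \<and> (\<Sum>i\<in>UNIV. x $ i) = 1}"

definition row_stochastic :: "real^'n^'n \<Rightarrow> bool" where
  "row_stochastic C \<longleftrightarrow> (\<forall>i j. 0 \<le> C $ i $ j) \<and> (\<forall>i. (\<Sum>j\<in>UNIV. C $ i $ j) = 1)"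

definition Wm :: "real^'n^'n \<Rightarrow> real^'n \<Rightarrow> real^'n^'n" where
  "Wm C x = diagm x + (mat 1 - diagm x) ** C"

definition Fmap :: "real^'n^'n \<Rightarrow> real^'n \<Rightarrow> real^'n \<Rightarrow> real^'n" where
  "Fmap C \<theta> x = ((mat 1 - diagm \<theta>) ** matrix_inv (mat 1 - transpose (Wm C x) ** diagm \<theta>))
                  *v ((1 / real CARD('n)) *\<^sub>R ones)"

definition Jac :: "real^'n^'n \<Rightarrow> real^'n \<Rightarrow> real^'n \<Rightarrow> real^'n^'n" where
  "Jac C \<theta> x = (mat 1 - diagm \<theta>) ** matrix_inv (mat 1 - transpose (Wm C x) ** diagm \<theta>)
                 ** (mat 1 - transpose C) ** diagm \<theta> ** matrix_inv (mat 1 - diagm \<theta>)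
                 ** diagm (Fmap C \<theta> x)"

definition theta_min :: "real^'n \<Rightarrow> real" where
  "theta_min \<theta> = Min (range (\<lambda>j. \<theta> $ j))"

definition theta_ave :: "real^'n \<Rightarrow> real" where
  "theta_ave \<theta> = (\<Sum>j\<in>UNIV. \<theta> $ j) / real CARD('n)"

end

theory Submission
  imports Defs
begin

lemma matrix_inv_props:
  fixes A :: "real^'n^'n"
  assumes "invertible A"
  shows "A ** matrix_inv A = mat 1" "matrix_inv A ** A = mat 1"
proof -
  have "\<exists>A'. A ** A' = mat 1 \<and> A' ** A = mat 1" using assms by (simp add: invertible_def)
  then have "A ** matrix_inv A = mat 1 \<and> matrix_inv A ** A = mat 1"
    unfolding matrix_inv_def by (rule someI_ex)
  then show "A ** matrix_inv A = mat 1" "matrix_inv A ** A = mat 1" by auto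
qed

lemma matrix_inv_unique':
  fixes A B :: "real^'n^'n"
  assumes "A ** B = mat 1" "B ** A = mat 1"
  shows "matrix_inv A = B"
proof -
  have inv: "invertible A" using assms invertible_def by blast
  have "matrix_inv A = matrix_inv A ** (A ** B)" using assms by simp
  also have "\<dots> = (matrix_inv A ** A) ** B" by (simp add: matrix_mul_assoc)
  also have "\<dots> = B" using matrix_inv_props[OF inv] by simp
  finally show ?thesis .
qed

lemma sum_delta_l[simp]: fixes i :: "'a::finite" shows "(\<Sum>j\<in>UNIV. f j * (if i = j then g j else 0)) = f i * (g i :: real)"
proof -
  have "(\<Sum>j\<in>UNIV. f j * (if i = j then g j else 0)) = (\<Sum>j\<in>UNIV. if i = j then f j * g j else 0)"
    by (rule sum.cong) auto
  then show ?thesis by simp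
qed
lemma sum_delta_l'[simp]: fixes i :: "'a::finite" shows "(\<Sum>j\<in>UNIV. f j * (if j = i then g j else 0)) = f i * (g i :: real)"
proof -
  have "(\<Sum>j\<in>UNIV. f j * (if j = i then g j else 0)) = (\<Sum>j\<in>UNIV. if i = j then f j * g j else 0)"
    by (rule sum.cong) auto
  then show ?thesis by simp
qed
lemma sum_delta_r[simp]: fixes i :: "'a::finite" shows "(\<Sum>j\<in>UNIV. (if i = j then g j else 0) * f j) = g i * (f i :: real)"
proof -
  have "(\<Sum>j\<in>UNIV. (if i = j then g j else 0) * f j) = (\<Sum>j\<in>UNIV. if i = j then g j * f j else 0)"
    by (rule sum.cong) auto
  then show ?thesis by simp
qed
lemma sum_delta_r'[simp]: fixes i :: "'a::finite" shows "(\<Sum>j\<in>UNIV. (if j = i then g j else 0) * f j) = g i * (f i :: real)"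
proof -
  have "(\<Sum>j\<in>UNIV. (if j = i then g j else 0) * f j) = (\<Sum>j\<in>UNIV. if i = j then g j * f j else 0)"
    by (rule sum.cong) auto
  then show ?thesis by simp
qed

lemma Wm_comp: "Wm C x $ i $ j = (if i = j then x $ i else 0) + (1 - x $ i) * C $ i $ j"
proof -
  have "(\<Sum>k\<in>UNIV. ((if i = k then 1 else 0) - (if i = k then x $ i else 0)) * C $ k $ j)
      = (\<Sum>k\<in>UNIV. if i = k then (1 - x $ i) * C $ i $ j else 0)"
    by (rule sum.cong) auto
  also have "\<dots> = (1 - x $ i) * C $ i $ j" by simp
  finally show ?thesis unfolding Wm_def diagm_def
    by (simp add: matrix_matrix_mult_def mat_def)
qed

lemma M_mulv:
  "(mat 1 - transpose (Wm C x) ** diagm t) *v u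
     = (\<chi> j. u $ j - (\<Sum>i\<in>UNIV. Wm C x $ i $ j * t $ i * u $ i))"
proof -
  have a: "(\<Sum>k\<in>UNIV. Wm C x $ k $ i * (if k = j then t $ j else 0)) = Wm C x $ j $ i * t $ j" for i j
  proof -
    have "(\<Sum>k\<in>UNIV. Wm C x $ k $ i * (if k = j then t $ j else 0))
        = (\<Sum>k\<in>UNIV. if k = j then Wm C x $ j $ i * t $ j else 0)" by (rule sum.cong) auto
    then show ?thesis by simp
  qed
  have b: "(\<Sum>j\<in>UNIV. u $ j * (if i = j then 1 else 0)) = u $ i" for i
  proof -
    have "(\<Sum>j\<in>UNIV. u $ j * (if i = j then 1 else 0)) = (\<Sum>j\<in>UNIV. if i = j then u $ i else 0)"
      by (rule sum.cong) auto
    then show ?thesis by simp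
  qed
  show ?thesis unfolding diagm_def
  by (simp add: vec_eq_iff matrix_vector_mult_def matrix_matrix_mult_def mat_def transpose_def
      algebra_simps sum_subtractf a b sum_distrib_left)
qed

lemma diag_mulv: "diagm t *v u = (\<chi> j. t $ j * u $ j)"
  unfolding diagm_def
  by (simp add: vec_eq_iff matrix_vector_mult_def if_distrib[of "\<lambda>t. t * _"] sum.delta cong: if_cong)

lemma IminusDiag_mulv: "(mat 1 - diagm t) *v u = (\<chi> j. (1 - t $ j) * u $ j)"
  unfolding diagm_def
  by (simp add: vec_eq_iff matrix_vector_mult_def mat_def algebra_simps sum_subtractf
        if_distrib[of "\<lambda>t. t * _"] sum.delta cong: if_cong)

lemma ImCT_mulv: fixes C :: "real^'n^'n" shows "(mat 1 - transpose C) *v u = (\<chi> j. u $ j - (\<Sum>i\<in>UNIV. C $ i $ j * u $ i))"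
proof -
  have b: "(\<Sum>j\<in>UNIV. (if i = j then 1 else 0) * u $ j) = u $ i" for i
  proof -
    have "(\<Sum>j\<in>UNIV. (if i = j then 1 else 0) * u $ j) = (\<Sum>j\<in>UNIV. if i = j then u $ i else 0)"
      by (rule sum.cong) auto
    then show ?thesis by simp
  qed
  have c: "(\<Sum>j\<in>UNIV. ((if i = j then 1 else 0) - C $ j $ i) * u $ j) = u $ i - (\<Sum>j\<in>UNIV. C $ j $ i * u $ j)" for i
    unfolding left_diff_distrib sum_subtractf b ..
  show ?thesis by (simp add: vec_eq_iff matrix_vector_mult_def mat_def transpose_def c)
qed

locale fctx =
  fixes C :: "real^'n^'n" and th :: "real^'n"
  assumes rs: "row_stochastic C" and th0: "\<And>i. 0 \<le> th $ i" and th1: "\<And>i. th $ i < 1"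
begin

definition "Mx x = mat 1 - transpose (Wm C x) ** diagm th"
definition "Bx = {x::real^'n. \<forall>i. 0 \<le> x $ i \<and> x $ i \<le> 1}"
definition "bv = (1 / real CARD('n)) *\<^sub>R (ones :: real^'n)"
definition "yv x = matrix_inv (Mx x) *v bv"
definition "dl = 1 - Max (range (\<lambda>i. th $ i))"
definition "Lop h u = (mat 1 - transpose C) *v (diagm (\<chi> i. th $ i * u $ i) *v h)"

lemma C_nonneg: "0 \<le> C $ i $ j" using rs unfolding row_stochastic_def by auto
lemma C_sum: "(\<Sum>j\<in>UNIV. C $ i $ j) = 1" using rs unfolding row_stochastic_def by auto
lemma C_le1: "C $ i $ j \<le> 1"
proof -
  have "C $ i $ j \<le> (\<Sum>j\<in>UNIV. C $ i $ j)"
    by (rule member_le_sum) (auto simp: C_nonneg)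
  then show ?thesis using C_sum by simp
qed

lemma dl_pos: "0 < dl" and dl_le: "dl \<le> 1 - th $ i"
proof -
  have "Max (range (\<lambda>i. th $ i)) \<in> range (\<lambda>i. th $ i)" by (rule Max_in) auto
  then obtain k where "Max (range (\<lambda>i. th $ i)) = th $ k" by (metis rangeE)
  then show "0 < dl" using th1[of k] by (simp add: dl_def)
  have "th $ i \<le> Max (range (\<lambda>i. th $ i))" by (rule Max_ge) auto
  then show "dl \<le> 1 - th $ i" by (simp add: dl_def)
qed

lemma W_nonneg: "x \<in> Bx \<Longrightarrow> 0 \<le> Wm C x $ i $ j"
  unfolding Bx_def Wm_comp using C_nonneg[of i j] by auto

lemma W_sum: "(\<Sum>j\<in>UNIV. Wm C x $ i $ j) = 1"
proof -
  have "(\<Sum>j\<in>UNIV. Wm C x $ i $ j) = (\<Sum>j\<in>UNIV. if i = j then x $ i else 0) + (1 - x $ i) * (\<Sum>j\<in>UNIV. C $ i $ j)"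
    by (simp only: Wm_comp sum.distrib sum_distrib_left)
  also have "\<dots> = 1" by (simp add: C_sum)
  finally show ?thesis .
qed

lemma key:
  assumes x: "x \<in> Bx" and eq: "Mx x *v u = r"
  shows "(\<Sum>i\<in>UNIV. (1 - th $ i) * \<bar>u $ i\<bar>) \<le> (\<Sum>j\<in>UNIV. \<bar>r $ j\<bar>)"
proof -
  have rj: "r $ j = u $ j - (\<Sum>i\<in>UNIV. Wm C x $ i $ j * th $ i * u $ i)" for j
    using eq unfolding Mx_def M_mulv by auto
  have uj: "\<bar>u $ j\<bar> \<le> \<bar>r $ j\<bar> + (\<Sum>i\<in>UNIV. Wm C x $ i $ j * th $ i * \<bar>u $ i\<bar>)" for j
  proof -
    have "\<bar>\<Sum>i\<in>UNIV. Wm C x $ i $ j * th $ i * u $ i\<bar> \<le> (\<Sum>i\<in>UNIV. \<bar>Wm C x $ i $ j * th $ i * u $ i\<bar>)"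
      by (rule sum_abs)
    also have "\<dots> = (\<Sum>i\<in>UNIV. Wm C x $ i $ j * th $ i * \<bar>u $ i\<bar>)"
      using W_nonneg[OF x] th0 by (simp add: abs_mult)
    finally show ?thesis using rj[of j] by linarith
  qed
  have "(\<Sum>j\<in>UNIV. \<bar>u $ j\<bar>) \<le> (\<Sum>j\<in>UNIV. \<bar>r $ j\<bar> + (\<Sum>i\<in>UNIV. Wm C x $ i $ j * th $ i * \<bar>u $ i\<bar>))"
    by (rule sum_mono) (rule uj)
  also have "\<dots> = (\<Sum>j\<in>UNIV. \<bar>r $ j\<bar>) + (\<Sum>i\<in>UNIV. (\<Sum>j\<in>UNIV. Wm C x $ i $ j) * (th $ i * \<bar>u $ i\<bar>))"
  proof -
    have "(\<Sum>j\<in>UNIV. \<Sum>i\<in>UNIV. Wm C x $ i $ j * th $ i * \<bar>u $ i\<bar>)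
        = (\<Sum>i\<in>UNIV. \<Sum>j\<in>UNIV. Wm C x $ i $ j * (th $ i * \<bar>u $ i\<bar>))"
      by (subst sum.swap) (simp add: mult.assoc)
    also have "\<dots> = (\<Sum>i\<in>UNIV. (\<Sum>j\<in>UNIV. Wm C x $ i $ j) * (th $ i * \<bar>u $ i\<bar>))"
      by (simp add: sum_distrib_right)
    finally show ?thesis by (simp only: sum.distrib)
  qed
  also have "\<dots> = (\<Sum>j\<in>UNIV. \<bar>r $ j\<bar>) + (\<Sum>i\<in>UNIV. th $ i * \<bar>u $ i\<bar>)"
    by (simp add: W_sum)
  finally show ?thesis by (simp add: left_diff_distrib sum_subtractf)
qed

lemma key_norm:
  assumes x: "x \<in> Bx" and eq: "Mx x *v u = r"
  shows "norm u \<le> (real CARD('n) / dl) * norm r"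
proof -
  have "dl * (\<Sum>i\<in>UNIV. \<bar>u $ i\<bar>) = (\<Sum>i\<in>UNIV. dl * \<bar>u $ i\<bar>)" by (simp add: sum_distrib_left)
  also have "\<dots> \<le> (\<Sum>i\<in>UNIV. (1 - th $ i) * \<bar>u $ i\<bar>)"
    by (rule sum_mono) (rule mult_right_mono[OF dl_le], simp)
  also have "\<dots> \<le> (\<Sum>j\<in>UNIV. \<bar>r $ j\<bar>)" by (rule key[OF x eq])
  also have "\<dots> \<le> (\<Sum>j\<in>(UNIV::'n set). norm r)" using component_le_norm_cart by (intro sum_mono) auto
  also have "\<dots> = real CARD('n) * norm r" by simp
  finally have "dl * (\<Sum>i\<in>UNIV. \<bar>u $ i\<bar>) \<le> real CARD('n) * norm r" .
  then have "(\<Sum>i\<in>UNIV. \<bar>u $ i\<bar>) \<le> (real CARD('n) / dl) * norm r"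
    using dl_pos by (simp add: field_simps)
  then show ?thesis using norm_le_l1_cart[of u] by linarith
qed

lemma Mx_inv: assumes x: "x \<in> Bx" shows "invertible (Mx x)"
proof -
  have "\<forall>u. Mx x *v u = 0 \<longrightarrow> u = 0"
  proof (intro allI impI)
    fix u assume "Mx x *v u = 0"
    from key_norm[OF x this] show "u = 0" by simp
  qed
  then show ?thesis using invertible_left_inverse matrix_left_invertible_ker by blast
qed

lemma My: assumes x: "x \<in> Bx" shows "Mx x *v yv x = bv"
  using matrix_inv_props[OF Mx_inv[OF x]] by (simp add: yv_def matrix_vector_mul_assoc)


lemma swapW: "(\<Sum>j\<in>UNIV. \<Sum>i\<in>UNIV. Wm C x $ i $ j * th $ i * f i) = (\<Sum>i\<in>UNIV. th $ i * f i)"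
proof -
  have "(\<Sum>j\<in>UNIV. \<Sum>i\<in>UNIV. Wm C x $ i $ j * th $ i * f i)
      = (\<Sum>i\<in>UNIV. \<Sum>j\<in>UNIV. Wm C x $ i $ j * (th $ i * f i))"
    by (subst sum.swap) (simp add: mult.assoc)
  also have "\<dots> = (\<Sum>i\<in>UNIV. (\<Sum>j\<in>UNIV. Wm C x $ i $ j) * (th $ i * f i))"
    by (simp add: sum_distrib_right)
  finally show ?thesis by (simp add: W_sum)
qed

lemma bv_comp[simp]: "bv $ j = 1 / real CARD('n)"
  by (simp add: bv_def ones_def)

lemma Fmap_eq: "Fmap C th x = (mat 1 - diagm th) *v yv x"
  by (simp add: Fmap_def yv_def Mx_def bv_def matrix_vector_mul_assoc)

lemma Fmap_comp: "Fmap C th x $ i = (1 - th $ i) * yv x $ i"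
  by (simp add: Fmap_eq IminusDiag_mulv)

lemma y_eq: assumes x: "x \<in> Bx"
  shows "yv x $ j = 1 / real CARD('n) + (\<Sum>i\<in>UNIV. Wm C x $ i $ j * th $ i * yv x $ i)"
proof -
  have "(Mx x *v yv x) $ j = bv $ j" using My[OF x] by simp
  then show ?thesis unfolding Mx_def M_mulv by simp
qed

lemma y_lower: assumes x: "x \<in> Bx" shows "1 / real CARD('n) \<le> yv x $ j"
proof -
  define u where "u = yv x"
  define v where "v = (\<chi> i. max 0 (- u $ i))"
  have v0: "0 \<le> v $ i" for i by (simp add: v_def)
  have Wth: "0 \<le> Wm C x $ i $ j * th $ i" for i j using W_nonneg[OF x] th0 by simp
  have vsub: "v $ j \<le> (\<Sum>i\<in>UNIV. Wm C x $ i $ j * th $ i * v $ i)" for j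
  proof (cases "0 \<le> u $ j")
    case True
    then have "v $ j = 0" by (simp add: v_def)
    moreover have "0 \<le> (\<Sum>i\<in>UNIV. Wm C x $ i $ j * th $ i * v $ i)"
      by (intro sum_nonneg mult_nonneg_nonneg Wth v0)
    ultimately show ?thesis by simp
  next
    case False
    then have "v $ j = - u $ j" by (simp add: v_def)
    also have "\<dots> = - 1 / real CARD('n) - (\<Sum>i\<in>UNIV. Wm C x $ i $ j * th $ i * u $ i)"
      using y_eq[OF x, of j] by (simp add: u_def)
    also have "\<dots> \<le> (\<Sum>i\<in>UNIV. Wm C x $ i $ j * th $ i * (- u $ i))"
      by (simp add: sum_negf)
    also have "\<dots> \<le> (\<Sum>i\<in>UNIV. Wm C x $ i $ j * th $ i * v $ i)"
      by (intro sum_mono mult_left_mono Wth) (simp add: v_def)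
    finally show ?thesis .
  qed
  have "(\<Sum>j\<in>UNIV. v $ j) \<le> (\<Sum>j\<in>UNIV. \<Sum>i\<in>UNIV. Wm C x $ i $ j * th $ i * v $ i)"
    by (intro sum_mono vsub)
  also have "\<dots> = (\<Sum>i\<in>UNIV. th $ i * v $ i)" by (rule swapW)
  finally have "(\<Sum>i\<in>UNIV. (1 - th $ i) * v $ i) \<le> 0"
    by (simp add: left_diff_distrib sum_subtractf)
  moreover have nn: "\<forall>i\<in>UNIV. 0 \<le> (1 - th $ i) * v $ i" using th1 v0 by (simp add: less_imp_le)
  ultimately have "(\<Sum>i\<in>UNIV. (1 - th $ i) * v $ i) = 0" using sum_nonneg[of UNIV "\<lambda>i. (1 - th $ i) * v $ i"] by auto
  then have "\<forall>i\<in>UNIV. (1 - th $ i) * v $ i = 0" using nn sum_nonneg_eq_0_iff[of UNIV "\<lambda>i. (1 - th $ i) * v $ i"] by simp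
  then have vz: "v $ i = 0" for i
  proof -
    have "(1 - th $ i) * v $ i = 0" using \<open>\<forall>i\<in>UNIV. (1 - th $ i) * v $ i = 0\<close> by blast
    moreover have "1 - th $ i \<noteq> 0" using th1[of i] by simp
    ultimately show ?thesis by simp
  qed
  have u0: "0 \<le> u $ i" for i
  proof -
    have "max 0 (- u $ i) = 0" using vz[of i] by (simp add: v_def)
    then show ?thesis by (metis max.cobounded2 neg_le_0_iff_le)
  qed
  have "0 \<le> (\<Sum>i\<in>UNIV. Wm C x $ i $ j * th $ i * yv x $ i)"
    using u0 by (intro sum_nonneg mult_nonneg_nonneg Wth) (simp add: u_def)
  then show ?thesis using y_eq[OF x, of j] by linarith
qed

lemma F_sum: assumes x: "x \<in> Bx" shows "(\<Sum>j\<in>UNIV. Fmap C th x $ j) = 1"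
proof -
  have "(\<Sum>j\<in>UNIV. yv x $ j) = (\<Sum>j\<in>UNIV. 1 / real CARD('n) + (\<Sum>i\<in>UNIV. Wm C x $ i $ j * th $ i * yv x $ i))"
    by (rule sum.cong[OF refl y_eq[OF x]])
  also have "\<dots> = 1 + (\<Sum>i\<in>UNIV. th $ i * yv x $ i)"
    by (simp add: sum.distrib swapW)
  moreover have "(\<Sum>j\<in>UNIV. Fmap C th x $ j) = (\<Sum>j\<in>UNIV. yv x $ j) - (\<Sum>j\<in>UNIV. th $ j * yv x $ j)"
    by (simp only: Fmap_comp left_diff_distrib mult_1 sum_subtractf)
  ultimately show ?thesis by simp
qed

lemma F_lower: assumes x: "x \<in> Bx" shows "(1 - th $ i) / real CARD('n) \<le> Fmap C th x $ i"
proof -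
  have "(1 - th $ i) * (1 / real CARD('n)) \<le> (1 - th $ i) * yv x $ i"
    using th1[of i] y_lower[OF x] by (intro mult_left_mono) auto
  then show ?thesis by (simp add: Fmap_comp)
qed

lemma F_upper: assumes x: "x \<in> Bx"
  shows "Fmap C th x $ i \<le> (1 + (\<Sum>j\<in>UNIV. th $ j) - th $ i) / real CARD('n)"
proof -
  let ?n = "real CARD('n)"
  have "1 = Fmap C th x $ i + (\<Sum>j\<in>UNIV - {i}. Fmap C th x $ j)"
    using F_sum[OF x] sum.remove[of UNIV i "\<lambda>j. Fmap C th x $ j"] by simp
  moreover have "(\<Sum>j\<in>UNIV - {i}. (1 - th $ j) / ?n) \<le> (\<Sum>j\<in>UNIV - {i}. Fmap C th x $ j)"
    by (intro sum_mono F_lower[OF x])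
  moreover have "(\<Sum>j\<in>UNIV. (1 - th $ j) / ?n) = (1 - th $ i) / ?n + (\<Sum>j\<in>UNIV - {i}. (1 - th $ j) / ?n)"
    using sum.remove[of UNIV i "\<lambda>j. (1 - th $ j) / ?n"] by simp
  moreover have "(\<Sum>j\<in>UNIV. (1 - th $ j) / ?n) = 1 - (\<Sum>j\<in>UNIV. th $ j) / ?n"
    by (simp add: sum_divide_distrib[symmetric] sum_subtractf diff_divide_distrib)
  ultimately have "Fmap C th x $ i \<le> (\<Sum>j\<in>UNIV. th $ j) / ?n + (1 - th $ i) / ?n" by linarith
  then show ?thesis by (simp add: add_divide_distrib diff_divide_distrib)
qed


lemma Lop_comp: "Lop h u $ j = th $ j * u $ j * h $ j - (\<Sum>i\<in>UNIV. C $ i $ j * (th $ i * u $ i * h $ i))"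
  by (simp add: Lop_def ImCT_mulv diag_mulv)

lemma Mdiff: "Mx x *v u - Mx x' *v u = Lop (x' - x) u"
proof -
  have "(Mx x *v u - Mx x' *v u) $ j = Lop (x' - x) u $ j" for j
  proof -
    have "(Mx x *v u - Mx x' *v u) $ j = (\<Sum>i\<in>UNIV. Wm C x' $ i $ j * th $ i * u $ i) - (\<Sum>i\<in>UNIV. Wm C x $ i $ j * th $ i * u $ i)"
      by (simp add: Mx_def M_mulv)
    also have "\<dots> = (\<Sum>i\<in>UNIV. (if i = j then th $ i * u $ i * (x' - x) $ i else 0) - C $ i $ j * (th $ i * u $ i * (x' - x) $ i))"
      unfolding sum_subtractf[symmetric]
      by (intro sum.cong refl) (simp add: Wm_comp algebra_simps)
    also have "\<dots> = Lop (x' - x) u $ j"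
      unfolding sum_subtractf Lop_comp by simp
    finally show ?thesis .
  qed
  then show ?thesis by (simp add: vec_eq_iff)
qed

lemma prod_bd:
  fixes a b c :: real
  assumes "\<bar>a\<bar> \<le> 1" "\<bar>b\<bar> \<le> B" "\<bar>c\<bar> \<le> D"
  shows "\<bar>a * b * c\<bar> \<le> B * D"
proof -
  have B0: "0 \<le> B" using assms(2) by linarith
  have "\<bar>b\<bar> * \<bar>c\<bar> \<le> B * D" by (rule mult_mono) (use assms B0 in auto)
  then have "\<bar>a\<bar> * (\<bar>b\<bar> * \<bar>c\<bar>) \<le> 1 * (B * D)" by (intro mult_mono) (use assms in auto)
  then show ?thesis by (simp add: abs_mult mult.assoc)
qed

definition "Kc = real CARD('n) * (1 + real CARD('n))"
definition "Ki = real CARD('n) / dl"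

lemma Kc_nonneg: "0 \<le> Kc" by (simp add: Kc_def)
lemma Ki_nonneg: "0 \<le> Ki" using dl_pos by (simp add: Ki_def)

lemma Lop_bound: "norm (Lop h u) \<le> Kc * norm h * norm u"
proof -
  have th_abs: "\<bar>th $ i\<bar> \<le> 1" for i using th0[of i] th1[of i] by simp
  have C_abs: "\<bar>C $ i $ j\<bar> \<le> 1" for i j using C_nonneg[of i j] C_le1[of i j] by simp
  have comp: "\<bar>Lop h u $ j\<bar> \<le> (1 + real CARD('n)) * (norm u * norm h)" for j
  proof -
    have t1: "\<bar>th $ j * u $ j * h $ j\<bar> \<le> norm u * norm h"
      by (rule prod_bd[OF th_abs component_le_norm_cart component_le_norm_cart])
    have "\<bar>\<Sum>i\<in>UNIV. C $ i $ j * (th $ i * u $ i * h $ i)\<bar> \<le> (\<Sum>i\<in>UNIV. \<bar>C $ i $ j * (th $ i * u $ i * h $ i)\<bar>)"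
      by (rule sum_abs)
    also have "\<dots> \<le> (\<Sum>i\<in>(UNIV::'n set). norm u * norm h)"
    proof (intro sum_mono)
      fix i
      have "\<bar>th $ i * u $ i * h $ i\<bar> \<le> norm u * norm h"
        by (rule prod_bd[OF th_abs component_le_norm_cart component_le_norm_cart])
      moreover have "\<bar>C $ i $ j * (th $ i * u $ i * h $ i)\<bar> \<le> 1 * \<bar>th $ i * u $ i * h $ i\<bar>"
        unfolding abs_mult[of "C $ i $ j"] by (rule mult_right_mono[OF C_abs]) simp
      ultimately show "\<bar>C $ i $ j * (th $ i * u $ i * h $ i)\<bar> \<le> norm u * norm h" by simp
    qed
    also have "\<dots> = real CARD('n) * (norm u * norm h)" by simp
    finally show ?thesis unfolding Lop_comp using t1 by (simp add: algebra_simps)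
  qed
  have "norm (Lop h u) \<le> (\<Sum>j\<in>UNIV. \<bar>Lop h u $ j\<bar>)" by (rule norm_le_l1_cart)
  also have "\<dots> \<le> (\<Sum>j\<in>(UNIV::'n set). (1 + real CARD('n)) * (norm u * norm h))"
    by (intro sum_mono comp)
  also have "\<dots> = Kc * norm h * norm u" by (simp add: Kc_def algebra_simps)
  finally show ?thesis .
qed

lemma inv_bound: "x \<in> Bx \<Longrightarrow> Mx x *v w = r \<Longrightarrow> norm w \<le> Ki * norm r"
  using key_norm by (simp add: Ki_def)

lemma ydiff_eq: assumes "x \<in> Bx" "x' \<in> Bx"
  shows "Mx x' *v (yv x' - yv x) = Lop (x' - x) (yv x)"
proof -
  have "Mx x' *v (yv x' - yv x) = Mx x *v yv x - Mx x' *v yv x"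
    using My[OF assms(1)] My[OF assms(2)] by (simp add: matrix_vector_mult_diff_distrib)
  then show ?thesis by (simp add: Mdiff)
qed

lemma ydiff_bound: assumes "x \<in> Bx" "x' \<in> Bx"
  shows "norm (yv x' - yv x) \<le> Ki * Kc * norm (yv x) * norm (x' - x)"
proof -
  have "norm (yv x' - yv x) \<le> Ki * norm (Lop (x' - x) (yv x))"
    by (rule inv_bound[OF assms(2) ydiff_eq[OF assms]])
  also have "\<dots> \<le> Ki * (Kc * norm (x' - x) * norm (yv x))"
    by (rule mult_left_mono[OF Lop_bound Ki_nonneg])
  finally show ?thesis by (simp add: algebra_simps)
qed

definition "Dy x h = matrix_inv (Mx x) *v Lop h (yv x)"

lemma MDy: "x \<in> Bx \<Longrightarrow> Mx x *v Dy x h = Lop h (yv x)"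
  using matrix_inv_props[OF Mx_inv] by (simp add: Dy_def matrix_vector_mul_assoc)

lemma rem_bound: assumes "x \<in> Bx" "x' \<in> Bx"
  shows "norm (yv x' - yv x - Dy x (x' - x)) \<le> (Ki * Kc) * (Ki * Kc) * norm (yv x) * (norm (x' - x) * norm (x' - x))"
proof -
  let ?h = "x' - x"
  have "Mx x' *v (yv x' - yv x - Dy x ?h) = Lop ?h (yv x) - Mx x' *v Dy x ?h"
    using ydiff_eq[OF assms] by (simp add: matrix_vector_mult_diff_distrib)
  also have "\<dots> = Mx x *v Dy x ?h - Mx x' *v Dy x ?h" using MDy[OF assms(1)] by simp
  also have "\<dots> = Lop ?h (Dy x ?h)" by (rule Mdiff)
  finally have e: "Mx x' *v (yv x' - yv x - Dy x ?h) = Lop ?h (Dy x ?h)" .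
  have d: "norm (Dy x ?h) \<le> Ki * (Kc * norm ?h * norm (yv x))"
    using inv_bound[OF assms(1) MDy[OF assms(1)]] Lop_bound[of ?h "yv x"] Ki_nonneg
    by (meson mult_left_mono order_trans)
  have "norm (yv x' - yv x - Dy x ?h) \<le> Ki * (Kc * norm ?h * norm (Dy x ?h))"
    using inv_bound[OF assms(2) e] Lop_bound[of ?h "Dy x ?h"] Ki_nonneg
    by (meson mult_left_mono order_trans)
  also have "\<dots> \<le> Ki * (Kc * norm ?h * (Ki * (Kc * norm ?h * norm (yv x))))"
    using d Ki_nonneg Kc_nonneg by (intro mult_left_mono) auto
  finally show ?thesis by (simp add: algebra_simps)
qed


lemma Dy_linear: "bounded_linear (Dy x)"
proof -
  have "Dy x = (\<lambda>h. (matrix_inv (Mx x) ** (mat 1 - transpose C) ** diagm (\<chi> i. th $ i * yv x $ i)) *v h)"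
    by (simp add: fun_eq_iff Dy_def Lop_def matrix_vector_mul_assoc matrix_mul_assoc)
  then show ?thesis by simp
qed

lemma norm_to0: "((\<lambda>y. c * norm (y - x)) \<longlongrightarrow> 0) (at x within S)"
proof -
  have "((\<lambda>y. c * norm (y - x)) \<longlongrightarrow> c * norm (x - x)) (at x within S)"
    by (intro tendsto_intros)
  then show ?thesis by simp
qed

lemma y_deriv:
  assumes x: "x \<in> Bx" and ev: "eventually (\<lambda>x'. x' \<in> Bx) (at x)"
  shows "(yv has_derivative Dy x) (at x)"
  unfolding has_derivative_at_within
proof (intro conjI Dy_linear)
  let ?c = "(Ki * Kc) * (Ki * Kc) * norm (yv x)"
  show "((\<lambda>y. (yv y - yv x - Dy x (y - x)) /\<^sub>R norm (y - x)) \<longlongrightarrow> 0) (at x)"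
  proof (rule Lim_null_comparison[OF _ norm_to0[of ?c]])
    show "\<forall>\<^sub>F y in at x. norm ((yv y - yv x - Dy x (y - x)) /\<^sub>R norm (y - x)) \<le> ?c * norm (y - x)"
      using ev
    proof (rule eventually_mono)
      fix y assume y: "y \<in> Bx"
      show "norm ((yv y - yv x - Dy x (y - x)) /\<^sub>R norm (y - x)) \<le> ?c * norm (y - x)"
      proof (cases "y = x")
        case True then show ?thesis by simp
      next
        case False
        then have pos: "0 < norm (y - x)" by simp
        have "norm ((yv y - yv x - Dy x (y - x)) /\<^sub>R norm (y - x)) = norm (yv y - yv x - Dy x (y - x)) / norm (y - x)"
          by (simp add: divide_inverse mult.commute)
        also have "\<dots> \<le> ?c * (norm (y - x) * norm (y - x)) / norm (y - x)"
          using rem_bound[OF x y] pos by (intro divide_right_mono) (auto simp: mult.assoc)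
        also have "\<dots> = ?c * norm (y - x)" using pos by simp
        finally show ?thesis .
      qed
    qed
  qed
qed

lemma y_cont: "continuous_on Bx yv"
  unfolding continuous_on_def
proof
  fix x assume x: "x \<in> Bx"
  let ?c = "Ki * Kc * norm (yv x)"
  have "((\<lambda>y. yv y - yv x) \<longlongrightarrow> 0) (at x within Bx)"
  proof (rule Lim_null_comparison[OF _ norm_to0[of ?c]])
    show "\<forall>\<^sub>F y in at x within Bx. norm (yv y - yv x) \<le> ?c * norm (y - x)"
      unfolding eventually_at_filter
      by (rule always_eventually) (auto intro: ydiff_bound[OF x])
  qed
  then show "(yv \<longlongrightarrow> yv x) (at x within Bx)" by (rule LIM_zero_cancel)
qed

lemma Fmap_fun: "Fmap C th = (\<lambda>x. (mat 1 - diagm th) *v yv x)"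
  by (simp add: fun_eq_iff Fmap_eq)

lemma F_cont: "continuous_on Bx (Fmap C th)"
  unfolding Fmap_fun
  by (rule bounded_linear.continuous_on[OF matrix_vector_mul_bounded_linear y_cont])

lemma diag_diff: fixes t :: "real^'n" shows "mat 1 - diagm t = diagm (\<chi> i. 1 - t $ i)"
  by (simp add: vec_eq_iff diagm_def mat_def)

lemma diag_mult: fixes a b :: "real^'n" shows "diagm a ** diagm b = diagm (\<chi> i. a $ i * b $ i)"
proof -
  have "(\<Sum>k\<in>UNIV. (if i = k then a $ i else 0) * (if k = j then b $ k else 0)) = (if i = j then a $ i * b $ i else 0)" for i j :: 'n
  proof -
    have "(\<Sum>k\<in>UNIV. (if i = k then a $ i else 0) * (if k = j then b $ k else 0)) = (\<Sum>k\<in>UNIV. if i = k then (if k = j then a $ i * b $ k else 0) else 0)"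
      by (intro sum.cong refl) auto
    then show ?thesis by simp
  qed
  then show ?thesis by (simp add: vec_eq_iff diagm_def matrix_matrix_mult_def)
qed

lemma Dinv: "matrix_inv (mat 1 - diagm th) = diagm (\<chi> i. 1 / (1 - th $ i))"
proof (rule matrix_inv_unique')
  have ne: "1 - th $ i \<noteq> 0" for i using th1[of i] by simp
  have "diagm ((\<chi> i. 1) :: real^'n) = mat 1" by (simp add: vec_eq_iff diagm_def mat_def)
  then show "(mat 1 - diagm th) ** diagm (\<chi> i. 1 / (1 - th $ i)) = mat 1"
       "diagm (\<chi> i. 1 / (1 - th $ i)) ** (mat 1 - diagm th) = mat 1"
    using th1 by (simp_all add: diag_diff diag_mult ne less_imp_neq)
qed

lemma Jac_eq: "Jac C th x *v h = (mat 1 - diagm th) *v Dy x h"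
proof -
  have ne: "th $ i \<noteq> 1" for i using th1[of i] by simp
  have "diagm th *v (diagm (\<chi> i. 1 / (1 - th $ i)) *v (diagm (Fmap C th x) *v h))
      = diagm (\<chi> i. th $ i * yv x $ i) *v h"
    by (simp add: vec_eq_iff diag_mulv Fmap_comp ne)
  then show ?thesis
    by (simp add: Jac_def Dy_def Lop_def matrix_vector_mul_assoc[symmetric] Dinv Mx_def)
qed

lemma F_deriv:
  assumes x: "x \<in> Bx" and ev: "eventually (\<lambda>x'. x' \<in> Bx) (at x)"
  shows "(Fmap C th has_derivative (\<lambda>h. Jac C th x *v h)) (at x)"
  unfolding Fmap_fun Jac_eq
  by (rule bounded_linear.has_derivative[OF matrix_vector_mul_bounded_linear y_deriv[OF x ev]])

end

theorem lemma2:
  fixes C :: "real^'n^'n" and \<theta> :: "real^'n"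
  assumes "CARD('n) \<ge> 2"
    and "row_stochastic C"
    and "\<forall>i. C $ i $ i = 0"
    and "\<forall>i. 0 \<le> \<theta> $ i \<and> \<theta> $ i \<le> 1"
    and "\<forall>i. \<theta> $ i < 1"
    and "\<exists>j. 0 < \<theta> $ j"
  shows "(\<forall>x\<in>int_Delta. Fmap C \<theta> differentiable (at x))
       \<and> continuous_on Delta (Fmap C \<theta>)
       \<and> (\<forall>x\<in>int_Delta. (Fmap C \<theta> has_derivative (\<lambda>h. Jac C \<theta> x *v h)) (at x))
       \<and> (\<forall>x\<in>Delta. \<forall>i.
            (1 - \<theta> $ i) / real CARD('n) \<le> Fmap C \<theta> x $ i
          \<and> Fmap C \<theta> x $ i \<le> (1 + (real CARD('n) * theta_ave \<theta> - theta_min \<theta>)) / real CARD('n))"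
proof -
  interpret fctx C \<theta>
    using assms by unfold_locales auto
  have DB: "Delta \<subseteq> Bx"
  proof
    fix x :: "real^'n" assume x: "x \<in> Delta"
    have "x $ i \<le> 1" for i
    proof -
      have "x $ i \<le> (\<Sum>j\<in>UNIV. x $ j)" by (rule member_le_sum) (use x in \<open>auto simp: Delta_def\<close>)
      then show ?thesis using x by (simp add: Delta_def)
    qed
    then show "x \<in> Bx" using x by (simp add: Delta_def Bx_def)
  qed
  have IB: "x $ i < 1" if x: "x \<in> int_Delta" for x :: "real^'n" and i
  proof -
    obtain j where j: "j \<noteq> i"
    proof (rule ccontr)
      assume "\<not> thesis"
      then have "\<forall>j. j = i" using that by blast
      then have "(UNIV :: 'n set) = {i}" by auto
      then have "card (UNIV :: 'n set) = card {i}" by (rule arg_cong[where f=card])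
      then have "CARD('n) = 1" by simp
      then show False using assms(1) by simp
    qed
    have "x $ i + x $ j = (\<Sum>k\<in>{i, j}. x $ k)" using j by simp
    also have "\<dots> \<le> (\<Sum>k\<in>UNIV. x $ k)"
      by (rule sum_mono2) (use x in \<open>auto simp: int_Delta_def less_imp_le\<close>)
    finally show ?thesis using x by (auto simp: int_Delta_def) (smt (verit) x int_Delta_def mem_Collect_eq)
  qed
  have ev: "eventually (\<lambda>x'. x' \<in> Bx) (at x)" if x: "x \<in> int_Delta" for x :: "real^'n"
  proof -
    have "eventually (\<lambda>x'. \<forall>i. 0 < x' $ i \<and> x' $ i < 1) (at x)"
    proof (rule eventually_all_finite)
      fix i
      have t: "((\<lambda>x'. x' $ i) \<longlongrightarrow> x $ i) (at x)" by (intro tendsto_intros)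
      have "eventually (\<lambda>x'. 0 < x' $ i) (at x)"
        by (rule order_tendstoD(1)[OF t]) (use x in \<open>auto simp: int_Delta_def\<close>)
      moreover have "eventually (\<lambda>x'. x' $ i < 1) (at x)"
        by (rule order_tendstoD(2)[OF t]) (rule IB[OF x])
      ultimately show "eventually (\<lambda>x'. 0 < x' $ i \<and> x' $ i < 1) (at x)"
        by (rule eventually_conj)
    qed
    then show ?thesis by (rule eventually_mono) (auto simp: Bx_def less_imp_le)
  qed
  have IDB: "x \<in> Bx" if "x \<in> int_Delta" for x :: "real^'n"
    using IB[OF that] that by (auto simp: int_Delta_def Bx_def less_imp_le)
  have der: "\<forall>x\<in>int_Delta. (Fmap C \<theta> has_derivative (\<lambda>h. Jac C \<theta> x *v h)) (at x)"
    using F_deriv IDB ev by blast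
  have bnd: "(1 - \<theta> $ i) / real CARD('n) \<le> Fmap C \<theta> x $ i
          \<and> Fmap C \<theta> x $ i \<le> (1 + (real CARD('n) * theta_ave \<theta> - theta_min \<theta>)) / real CARD('n)"
    if x: "x \<in> Delta" for x i
  proof
    have xB: "x \<in> Bx" using DB x by auto
    show "(1 - \<theta> $ i) / real CARD('n) \<le> Fmap C \<theta> x $ i" by (rule F_lower[OF xB])
    have "theta_min \<theta> \<le> \<theta> $ i" unfolding theta_min_def by (rule Min_le) auto
    moreover have "real CARD('n) * theta_ave \<theta> = (\<Sum>j\<in>UNIV. \<theta> $ j)"
      by (simp add: theta_ave_def)
    ultimately have "(1 + (\<Sum>j\<in>UNIV. \<theta> $ j) - \<theta> $ i) / real CARD('n)
        \<le> (1 + (real CARD('n) * theta_ave \<theta> - theta_min \<theta>)) / real CARD('n)"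
      by (intro divide_right_mono) auto
    with F_upper[OF xB, of i]
    show "Fmap C \<theta> x $ i \<le> (1 + (real CARD('n) * theta_ave \<theta> - theta_min \<theta>)) / real CARD('n)"
      by linarith
  qed
  show ?thesis
    using der bnd continuous_on_subset[OF F_cont DB] by (auto intro: differentiableI)
qed

end
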